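(* Consider the inexact Bregman proximal point algorithm described in the context, with $\Phi$ Legendre and $0\le\rho_k\le\rho<1$ for all $k$. Assume that there exists $z^\star\in\operatorname{zer}T\cap\operatorname{int}\operatorname{dom}\Phi$ such that $D_\Phi(z^\star,\cdot)$ is coercive (this holds, e.g., if $\operatorname{dom}\Phi^*$ is open). Then there exists $z^\infty\in\operatorname{zer}T\cap\operatorname{int}\operatorname{dom}\Phi$ such that $z^k\to z^\infty$, $p^k\to z^\infty$ and $w^k\to0$.
   Context: Let $\mathbb{E}$ be a finite-dimensional Euclidean space, $\Gamma_0(\mathbb{E})$ the proper lsc convex functions $\mathbb{E}\to\mathbb{R}\cup\{+\infty\}$. $\Phi\in\Gamma_0(\mathbb{E})$ is Legendre if it is essentially smooth ($\operatorname{int}\operatorname{dom}\Phi\ne\emptyset$, differentiable there, $\|\nabla\Phi(z^\nu)\|\to\infty$ whenever $\operatorname{int}\operatorname{dom}\Phi\ni z^\nu\to z\in\operatorname{bdry}\operatorname{dom}\Phi$) and essentially strictly convex (strictly convex on every convex subset of $\operatorname{dom}\partial\Phi$); then $\nabla\Phi:\operatorname{int}\operatorname{dom}\Phi\to\operatorname{int}\operatorname{dom}\Phi^*$ is a bijection with inverse $\nabla\Phi^*$. $D_\Phi(z_1,z_2)=\Phi(z_1)-\Phi(z_2)-\langle\nabla\Phi(z_2),z_1-z_2\rangle$ if $z_1\in\operatorname{dom}\Phi$, $z_2\in\operatorname{int}\operatorname{dom}\Phi$, and $+\infty$ otherwise. Let $T:\mathbb{E}\rightrightarrows\mathbb{E}$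 be maximal monotone, $\operatorname{zer}T=T^{-1}(0)$, and assume $\operatorname{int}\operatorname{dom}\Phi\cap\operatorname{dom}T\ne\emptyset$. Inexact Bregman proximal point algorithm: given $z^0\in\operatorname{int}\operatorname{dom}\Phi$, step sizes $\sigma_k\ge\sigma>0$ and tolerances $\rho_k\in[0,1)$, it generates for $k=0,1,\dots$ triples $(z^{k+1},p^k,w^k)$ with $p^k\in\operatorname{dom}\Phi$, $w^k\in T(p^k)$, $\nabla\Phi(z^k)-\sigma_kw^k\in\operatorname{int}\operatorname{dom}\Phi^*$, $z^{k+1}=\nabla\Phi^*(\nabla\Phi(z^k)-\sigma_kw^k)\in\operatorname{int}\operatorname{dom}\Phi$, and $D_\Phi(p^k,z^{k+1})\le\rho_kD_\Phi(p^k,z^k)$. A function $h$ is coercive if $h(z)\to\infty$ as $\|z\|\to\infty$. *)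

theory Defs
  imports "HOL-Analysis.Analysis" "HOL-Library.Extended_Real"
begin

text \<open>Functions E -> R \<union> {+\<infinity>} are modelled as 'a => ereal (never taking -\<infinity> when proper).\<close>

definition edom :: "('a \<Rightarrow> ereal) \<Rightarrow> 'a set" where
  "edom f = {x. f x < \<infinity>}"

definition proper_fun :: "('a \<Rightarrow> ereal) \<Rightarrow> bool" where
  "proper_fun f \<longleftrightarrow> (\<forall>x. f x \<noteq> -\<infinity>) \<and> (\<exists>x. f x < \<infinity>)"

definition lsc_fun :: "('a::metric_space \<Rightarrow> ereal) \<Rightarrow> bool" where
  "lsc_fun f \<longleftrightarrow> (\<forall>x s. s \<longlonglongrightarrow> x \<longrightarrow> f x \<le> liminf (\<lambda>n. f (s n)))"

definition econvex :: "('a::real_vector \<Rightarrow> ereal) \<Rightarrow> bool" where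
  "econvex f \<longleftrightarrow> (\<forall>x y t. 0 < t \<and> t < 1 \<longrightarrow>
      f ((1 - t) *\<^sub>R x + t *\<^sub>R y) \<le> ereal (1 - t) * f x + ereal t * f y)"

definition Gamma0 :: "('a::euclidean_space \<Rightarrow> ereal) set" where
  "Gamma0 = {f. proper_fun f \<and> lsc_fun f \<and> econvex f}"

text \<open>Gradient at x (meaningful where f is finite near x and differentiable).\<close>
definition egrad :: "('a::euclidean_space \<Rightarrow> ereal) \<Rightarrow> 'a \<Rightarrow> 'a" where
  "egrad f x = (SOME g. ((\<lambda>y. real_of_ereal (f y)) has_derivative (\<lambda>h. g \<bullet> h)) (at x))"

definition ediff_at :: "('a::euclidean_space \<Rightarrow> ereal) \<Rightarrow> 'a \<Rightarrow> bool" where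
  "ediff_at f x \<longleftrightarrow> (\<exists>g. ((\<lambda>y. real_of_ereal (f y)) has_derivative (\<lambda>h. g \<bullet> h)) (at x))"

definition conj_fun :: "('a::euclidean_space \<Rightarrow> ereal) \<Rightarrow> 'a \<Rightarrow> ereal" where
  "conj_fun f y = (SUP x. ereal (x \<bullet> y) - f x)"

definition subdiff :: "('a::euclidean_space \<Rightarrow> ereal) \<Rightarrow> 'a \<Rightarrow> 'a set" where
  "subdiff f x = {g. f x \<noteq> \<infinity> \<and> f x \<noteq> -\<infinity> \<and>
      (\<forall>y. f x + ereal (g \<bullet> (y - x)) \<le> f y)}"

definition essentially_smooth :: "('a::euclidean_space \<Rightarrow> ereal) \<Rightarrow> bool" where
  "essentially_smooth f \<longleftrightarrow>
     interior (edom f) \<noteq> {} \<and>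
     (\<forall>x \<in> interior (edom f). ediff_at f x) \<and>
     (\<forall>s z. (\<forall>n. s n \<in> interior (edom f)) \<and> s \<longlonglongrightarrow> z \<and> z \<in> frontier (edom f)
        \<longrightarrow> filterlim (\<lambda>n. norm (egrad f (s n))) at_top sequentially)"

definition strictly_convex_on_set :: "'a::real_vector set \<Rightarrow> ('a \<Rightarrow> ereal) \<Rightarrow> bool" where
  "strictly_convex_on_set C f \<longleftrightarrow> (\<forall>x\<in>C. \<forall>y\<in>C. \<forall>t. x \<noteq> y \<and> 0 < t \<and> t < 1 \<longrightarrow>
      f ((1 - t) *\<^sub>R x + t *\<^sub>R y) < ereal (1 - t) * f x + ereal t * f y)"

definition essentially_strictly_convex :: "('a::euclidean_space \<Rightarrow> ereal) \<Rightarrow> bool" where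
  "essentially_strictly_convex f \<longleftrightarrow>
     (\<forall>C. convex C \<and> C \<subseteq> {x. subdiff f x \<noteq> {}} \<longrightarrow> strictly_convex_on_set C f)"

definition legendre :: "('a::euclidean_space \<Rightarrow> ereal) \<Rightarrow> bool" where
  "legendre f \<longleftrightarrow> f \<in> Gamma0 \<and> essentially_smooth f \<and> essentially_strictly_convex f"

definition bregman :: "('a::euclidean_space \<Rightarrow> ereal) \<Rightarrow> 'a \<Rightarrow> 'a \<Rightarrow> ereal" where
  "bregman f z1 z2 = (if z1 \<in> edom f \<and> z2 \<in> interior (edom f)
      then f z1 - f z2 - ereal (egrad f z2 \<bullet> (z1 - z2)) else \<infinity>)"

definition monotone_op :: "('a::euclidean_space \<Rightarrow> 'a set) \<Rightarrow> bool" where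
  "monotone_op T \<longleftrightarrow> (\<forall>x y u v. u \<in> T x \<and> v \<in> T y \<longrightarrow> 0 \<le> (u - v) \<bullet> (x - y))"

definition maximal_monotone :: "('a::euclidean_space \<Rightarrow> 'a set) \<Rightarrow> bool" where
  "maximal_monotone T \<longleftrightarrow> monotone_op T \<and>
     (\<forall>x u. (\<forall>y v. v \<in> T y \<longrightarrow> 0 \<le> (u - v) \<bullet> (x - y)) \<longrightarrow> u \<in> T x)"

definition op_dom :: "('a \<Rightarrow> 'b set) \<Rightarrow> 'a set" where
  "op_dom T = {x. T x \<noteq> {}}"

definition zer :: "('a \<Rightarrow> 'b::zero set) \<Rightarrow> 'a set" where
  "zer T = {x. 0 \<in> T x}"

definition coercive :: "('a::real_normed_vector \<Rightarrow> ereal) \<Rightarrow> bool" where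
  "coercive h \<longleftrightarrow> (\<forall>M::real. \<exists>R. \<forall>z. R \<le> norm z \<longrightarrow> ereal M \<le> h z)"

end

theory Submission
  imports Defs
begin

locale leg =
  fixes Phi :: "'a::euclidean_space \<Rightarrow> ereal"
  assumes leg: "legendre Phi"
begin

definition f :: "'a \<Rightarrow> real" where "f x = real_of_ereal (Phi x)"
abbreviation U where "U \<equiv> interior (edom Phi)"
abbreviation G where "G \<equiv> egrad Phi"

lemma proper: "proper_fun Phi" and lsc: "lsc_fun Phi" and cvx: "econvex Phi"
  and smooth: "essentially_smooth Phi" and sconv: "essentially_strictly_convex Phi"
  using leg unfolding legendre_def Gamma0_def by auto

lemma not_minf: "Phi x \<noteq> -\<infinity>" using proper unfolding proper_fun_def by auto

lemma fin: "x \<in> edom Phi \<Longrightarrow> Phi x = ereal (f x)"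
  using not_minf[of x] unfolding edom_def f_def by (cases "Phi x") auto

lemma edom_iff: "x \<in> edom Phi \<longleftrightarrow> Phi x \<noteq> \<infinity>"
  unfolding edom_def by (cases "Phi x") auto
  
lemma edom_ne: "edom Phi \<noteq> {}"
  using proper unfolding proper_fun_def edom_def by auto

lemma U_sub: "U \<subseteq> edom Phi" by (rule interior_subset)

lemma conv_comb:
  assumes "a \<in> edom Phi" "b \<in> edom Phi" "0 \<le> t" "t \<le> 1"
  shows "(1 - t) *\<^sub>R a + t *\<^sub>R b \<in> edom Phi \<and> f ((1 - t) *\<^sub>R a + t *\<^sub>R b) \<le> (1 - t) * f a + t * f b"
proof (cases "t = 0 \<or> t = 1")
  case True then show ?thesis using assms by auto
next
  case False
  then have t: "0 < t" "t < 1" using assms by auto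
  have "Phi ((1 - t) *\<^sub>R a + t *\<^sub>R b) \<le> ereal (1 - t) * Phi a + ereal t * Phi b"
    using cvx t unfolding econvex_def by blast
  also have "\<dots> = ereal ((1 - t) * f a + t * f b)" using fin assms by simp
  finally have *: "Phi ((1 - t) *\<^sub>R a + t *\<^sub>R b) \<le> ereal ((1 - t) * f a + t * f b)" .
  then have "(1 - t) *\<^sub>R a + t *\<^sub>R b \<in> edom Phi" unfolding edom_def
    using le_less_trans by fastforce
  with * show ?thesis using fin by auto
qed

lemma grad: "x \<in> U \<Longrightarrow> (f has_derivative (\<lambda>h. G x \<bullet> h)) (at x)"
proof -
  assume x: "x \<in> U"
  then have "ediff_at Phi x" using smooth unfolding essentially_smooth_def by blast
  then have "\<exists>g. ((\<lambda>y. real_of_ereal (Phi y)) has_derivative (\<lambda>h. g \<bullet> h)) (at x)"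
    unfolding ediff_at_def .
  then have "((\<lambda>y. real_of_ereal (Phi y)) has_derivative (\<lambda>h. G x \<bullet> h)) (at x)"
    unfolding egrad_def by (rule someI_ex)
  then show ?thesis unfolding f_def[abs_def] .
qed

lemma f_cont: "x \<in> U \<Longrightarrow> isCont f x"
  using grad has_derivative_continuous by blast

lemma tangent:
  assumes x: "x \<in> U" and u: "u \<in> edom Phi"
  shows "f x + G x \<bullet> (u - x) \<le> f u"
proof -
  define phi where "phi t = f (x + t *\<^sub>R (u - x))" for t :: real
  have d: "((\<lambda>t. x + t *\<^sub>R (u - x)) has_derivative (\<lambda>t. t *\<^sub>R (u - x))) (at 0)"
    by (auto intro!: derivative_eq_intros)
  have g0: "(f has_derivative (\<lambda>h. G x \<bullet> h)) (at (x + 0 *\<^sub>R (u - x)))" using grad[OF x] by simp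
  have "(phi has_derivative (\<lambda>t. G x \<bullet> (t *\<^sub>R (u - x)))) (at 0)"
    unfolding phi_def using has_derivative_compose[OF d g0] by simp
  then have "(phi has_field_derivative (G x \<bullet> (u - x))) (at 0)"
    unfolding has_field_derivative_def by (rule has_derivative_eq_rhs) (simp_all add: fun_eq_iff algebra_simps)
  then have lim: "((\<lambda>t. (phi t - phi 0) / t) \<longlongrightarrow> G x \<bullet> (u - x)) (at 0)"
    using DERIV_def by (simp add: has_field_derivative_iff)
  then have lim': "((\<lambda>t. (phi t - phi 0) / t) \<longlongrightarrow> G x \<bullet> (u - x)) (at_right 0)"
    by (rule filterlim_mono) (auto simp: at_within_le_at)
  have ev: "\<forall>\<^sub>F t in at_right 0. (phi t - phi 0) / t \<le> f u - f x"
    unfolding eventually_at_right_field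
  proof (intro exI[of _ 1] conjI allI impI)
    fix t :: real assume t: "0 < t" "t < 1"
    have xe: "x \<in> edom Phi" using x U_sub by auto
    have eq: "x + t *\<^sub>R (u - x) = (1 - t) *\<^sub>R x + t *\<^sub>R u" by (simp add: algebra_simps)
    have "phi t \<le> (1 - t) * f x + t * f u"
      unfolding phi_def eq using conv_comb[OF xe u, of t] t by auto
    then have "phi t - phi 0 \<le> t * (f u - f x)" by (simp add: phi_def algebra_simps)
    then show "(phi t - phi 0) / t \<le> f u - f x" using t by (simp add: divide_le_eq mult.commute)
  qed simp
  have "G x \<bullet> (u - x) \<le> f u - f x"
    by (rule tendsto_upperbound[OF lim' ev]) simp
  then show ?thesis by simp
qed


lemma subgrad_eq_grad:
  assumes x: "x \<in> U" and sg: "\<And>u. u \<in> edom Phi \<Longrightarrow> f x + g \<bullet> (u - x) \<le> f u"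
  shows "g = G x"
proof -
  define H where "H u = f u - g \<bullet> u" for u
  have dH: "(H has_derivative (\<lambda>h. G x \<bullet> h - g \<bullet> h)) (at x)"
    unfolding H_def using grad[OF x] by (auto intro!: derivative_eq_intros)
  have "\<forall>\<^sub>F y in at x. y \<in> U"
    using eventually_at_topological open_interior x by blast
  then have "\<forall>\<^sub>F y in at x. H x \<le> H y"
  proof (rule eventually_mono)
    fix y assume "y \<in> U"
    then have "f x + g \<bullet> (y - x) \<le> f y" using sg U_sub by auto
    then show "H x \<le> H y" unfolding H_def by (simp add: inner_diff_right)
  qed
  from has_derivative_local_min[OF dH this]
  have "(\<lambda>h. G x \<bullet> h - g \<bullet> h) = (\<lambda>h. 0)" .
  then have "G x \<bullet> (G x - g) - g \<bullet> (G x - g) = 0" by meson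
  then have "(G x - g) \<bullet> (G x - g) = 0" by (simp add: inner_diff_left)
  then show ?thesis by simp
qed

lemma sc_contra:
  assumes x12: "x1 \<noteq> x2" "x1 \<in> edom Phi" "x2 \<in> edom Phi"
    and lb: "\<And>u. u \<in> edom Phi \<Longrightarrow> c + g \<bullet> u \<le> f u"
    and e1: "f x1 = c + g \<bullet> x1" and e2: "f x2 = c + g \<bullet> x2"
  shows False
proof -
  define C where "C = closed_segment x1 x2"
  have onC: "x \<in> edom Phi \<and> f x = c + g \<bullet> x" if "x \<in> C" for x
  proof -
    obtain t where t: "0 \<le> t" "t \<le> 1" "x = (1 - t) *\<^sub>R x1 + t *\<^sub>R x2"
      using \<open>x \<in> C\<close> unfolding C_def closed_segment_def by auto
    from conv_comb[OF x12(2,3) t(1,2)] t(3)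
    have *: "x \<in> edom Phi" "f x \<le> (1 - t) * f x1 + t * f x2" by auto
    have "(1 - t) * f x1 + t * f x2 = c + g \<bullet> x"
      unfolding e1 e2 t(3) by (simp add: algebra_simps inner_add_right)
    with * lb[OF *(1)] show ?thesis by auto
  qed
  have "C \<subseteq> {x. subdiff Phi x \<noteq> {}}"
  proof
    fix x assume xC: "x \<in> C"
    have "g \<in> subdiff Phi x"
      unfolding subdiff_def
    proof (safe)
      show "Phi x = \<infinity> \<Longrightarrow> False" using onC[OF xC] fin by auto
      show "Phi x = -\<infinity> \<Longrightarrow> False" using not_minf by auto
      fix y
      show "Phi x + ereal (g \<bullet> (y - x)) \<le> Phi y"
      proof (cases "y \<in> edom Phi")
        case True
        have "f x + g \<bullet> (y - x) \<le> f y" using onC[OF xC] lb[OF True] by (simp add: inner_diff_right)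
        then show ?thesis using fin[OF True] fin onC[OF xC] by simp
      next
        case False then show ?thesis using edom_iff by auto
      qed
    qed
    then show "x \<in> {x. subdiff Phi x \<noteq> {}}" by auto
  qed
  moreover have "convex C" unfolding C_def by simp
  ultimately have scC: "strictly_convex_on_set C Phi" using sconv unfolding essentially_strictly_convex_def by blast
  have x1C: "x1 \<in> C" and x2C: "x2 \<in> C" unfolding C_def by auto
  note sc = scC[unfolded strictly_convex_on_set_def, rule_format, OF x1C x2C, of "1/2"]
  have lt: "Phi ((1 - 1/2) *\<^sub>R x1 + (1/2) *\<^sub>R x2) < ereal (1 - 1/2) * Phi x1 + ereal (1/2) * Phi x2"
    by (rule sc) (use x12(1) in simp)
  define m where "m = (1 - 1/2) *\<^sub>R x1 + (1/2::real) *\<^sub>R x2"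
  have "m \<in> C" unfolding C_def m_def closed_segment_def by (auto intro!: exI[of _ "1/2"])
  then have "Phi m = ereal (c + g \<bullet> m)" using onC fin by auto
  moreover have "ereal (1 - 1/2) * Phi x1 + ereal (1/2) * Phi x2 = ereal (c + g \<bullet> m)"
    using fin[OF x12(2)] fin[OF x12(3)] e1 e2 unfolding m_def
    by (simp add: algebra_simps inner_add_right, simp add: field_simps)
  ultimately show False using lt unfolding m_def by simp
qed

lemma lsc_seq:
  assumes s: "s \<longlonglongrightarrow> x" and b: "b \<longlonglongrightarrow> B"
    and le: "\<And>n. s n \<in> edom Phi \<and> f (s n) \<le> b n"
  shows "x \<in> edom Phi \<and> f x \<le> B"
proof -
  have "Phi x \<le> liminf (\<lambda>n. Phi (s n))" using lsc s unfolding lsc_fun_def by blast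
  also have "\<dots> \<le> liminf (\<lambda>n. ereal (b n))"
    by (rule Liminf_mono) (use le fin in auto)
  also have "\<dots> = ereal B"
    by (rule lim_imp_Liminf) (use b in auto)
  finally have *: "Phi x \<le> ereal B" .
  then have "x \<in> edom Phi" unfolding edom_def using le_less_trans by fastforce
  with * fin show ?thesis by auto
qed

end
context leg begin

definition D :: "'a \<Rightarrow> 'a \<Rightarrow> real" where "D u a = f u - f a - G a \<bullet> (u - a)"

lemma D_nonneg: "a \<in> U \<Longrightarrow> u \<in> edom Phi \<Longrightarrow> 0 \<le> D u a"
  using tangent[of a u] unfolding D_def by simp

lemma grad_bound:
  assumes x0: "x0 \<in> U"
  shows "\<exists>r>0. \<forall>y\<in>U. r * norm (G y) - 1 \<le> D x0 y"
proof -
  obtain d where d: "d > 0" "\<And>y. y \<noteq> x0 \<Longrightarrow> norm (y - x0) < d \<Longrightarrow> norm (f y - f x0) < 1"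
    using f_cont[OF x0] unfolding isCont_def LIM_eq by (meson zero_less_one)
  obtain e where e: "e > 0" "ball x0 e \<subseteq> U"
    using x0 open_interior open_contains_ball by blast
  define r where "r = min d e / 2"
  have r: "r > 0" "r < d" "r < e" using d e unfolding r_def by auto
  have "r * norm (G y) - 1 \<le> D x0 y" if y: "y \<in> U" for y
  proof -
    define u where "u = (if G y = 0 then x0 else x0 + (r / norm (G y)) *\<^sub>R G y)"
    have nu: "norm (u - x0) \<le> r" using r unfolding u_def by auto
    then have "u \<in> ball x0 e" using r by (simp add: dist_norm norm_minus_commute)
    then have uU: "u \<in> U" using e by auto
    have fu: "f u < f x0 + 1"
    proof (cases "u = x0")
      case False then show ?thesis using d(2)[of u] nu r by auto
    qed simp
    have gu: "G y \<bullet> (u - y) = G y \<bullet> (x0 - y) + r * norm (G y)"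
    proof (cases "G y = 0")
      case True then show ?thesis unfolding u_def by simp
    next
      case False
      have "G y \<bullet> (u - y) = G y \<bullet> (x0 - y) + (r / norm (G y)) * (G y \<bullet> G y)"
        unfolding u_def using False by (simp add: inner_diff_right inner_add_right algebra_simps)
      also have "(r / norm (G y)) * (G y \<bullet> G y) = r * norm (G y)"
        using False by (simp add: power2_norm_eq_inner[symmetric] power2_eq_square)
      finally show ?thesis .
    qed
    have "f y + G y \<bullet> (u - y) \<le> f u" using tangent[OF y] uU U_sub by auto
    then show ?thesis using fu gu unfolding D_def by simp
  qed
  then show ?thesis using r by blast
qed


lemma lim_le_const: "X \<longlonglongrightarrow> (a::real) \<Longrightarrow> \<forall>n. X n \<le> b \<Longrightarrow> a \<le> b"
  by (rule tendsto_upperbound) (auto intro: always_eventually)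

lemma lim_ge_const: "X \<longlonglongrightarrow> (a::real) \<Longrightarrow> \<forall>n. b \<le> X n \<Longrightarrow> b \<le> a"
  by (rule tendsto_lowerbound) (auto intro: always_eventually)

lemma G_cont_at:
  assumes x: "x \<in> U" and eps: "\<epsilon> > 0"
  shows "\<exists>d>0. \<forall>y\<in>U. norm (y - x) < d \<longrightarrow> norm (G y - G x) < \<epsilon>"
proof (rule ccontr)
  assume neg: "\<not> ?thesis"
  obtain r where r: "r > 0" "\<And>y. y \<in> U \<Longrightarrow> r * norm (G y) - 1 \<le> D x y"
    using grad_bound[OF x] by blast
  obtain d1 where d1: "d1 > 0" "\<And>y. y \<noteq> x \<Longrightarrow> norm (y - x) < d1 \<Longrightarrow> norm (f y - f x) < 1"
    using f_cont[OF x] unfolding isCont_def LIM_eq by (meson zero_less_one)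
  define d0 where "d0 = min (r/2) d1"
  have d0: "d0 > 0" using r d1 unfolding d0_def by auto
  have "\<forall>n. \<exists>y\<in>U. norm (y - x) < min d0 (inverse (real (Suc n))) \<and> \<not> norm (G y - G x) < \<epsilon>"
  proof
    fix n
    have "min d0 (inverse (real (Suc n))) > 0" using d0 by simp
    then show "\<exists>y\<in>U. norm (y - x) < min d0 (inverse (real (Suc n))) \<and> \<not> norm (G y - G x) < \<epsilon>"
      using neg by blast
  qed
  then obtain ys where ys: "\<And>n. ys n \<in> U" "\<And>n. norm (ys n - x) < min d0 (inverse (real (Suc n)))"
    "\<And>n. \<not> norm (G (ys n) - G x) < \<epsilon>"
    by metis
  have ys_lim: "ys \<longlonglongrightarrow> x"
  proof -
    have "(\<lambda>n. ys n - x) \<longlonglongrightarrow> 0"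
      by (rule Lim_null_comparison[OF _ LIMSEQ_inverse_real_of_nat])
         (use ys(2) in \<open>auto intro!: always_eventually less_imp_le\<close>)
    then show ?thesis by (simp add: LIM_zero_iff)
  qed
  have bnd: "norm (G (ys n)) \<le> 4 / r" for n
  proof -
    have n1: "norm (ys n - x) \<le> r / 2" and n2: "norm (f (ys n) - f x) \<le> 1"
      using ys(2)[of n] d1(2)[of "ys n"] unfolding d0_def by (auto, cases "ys n = x", auto)
    have "r * norm (G (ys n)) - 1 \<le> D x (ys n)" using r(2) ys(1) by blast
    also have "D x (ys n) = f x - f (ys n) + G (ys n) \<bullet> (ys n - x)"
      unfolding D_def by (simp add: inner_diff_right)
    also have "G (ys n) \<bullet> (ys n - x) \<le> norm (G (ys n)) * norm (ys n - x)"
      by (rule norm_cauchy_schwarz)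
    also have "\<dots> \<le> norm (G (ys n)) * (r / 2)" using n1 by (intro mult_left_mono) auto
    finally have "r * norm (G (ys n)) - 1 \<le> f x - f (ys n) + norm (G (ys n)) * (r / 2)" by simp
    moreover have "f x - f (ys n) \<le> 1" using n2 by auto
    ultimately have "(r / 2) * norm (G (ys n)) \<le> 2" by (simp add: algebra_simps)
    then show ?thesis using r(1) by (simp add: field_simps)
  qed
  have "bounded (range (\<lambda>n. G (ys n)))" unfolding bounded_iff using bnd by blast
  then obtain g q where q: "strict_mono q" "((\<lambda>n. G (ys n)) \<circ> q) \<longlonglongrightarrow> g"
    using bounded_imp_convergent_subsequence by blast
  have ysq: "(ys \<circ> q) \<longlonglongrightarrow> x" using LIMSEQ_subseq_LIMSEQ[OF ys_lim q(1)] .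
  have "f x + g \<bullet> (u - x) \<le> f u" if u: "u \<in> edom Phi" for u
  proof -
    have "(\<lambda>n. f (ys (q n)) + G (ys (q n)) \<bullet> (u - ys (q n))) \<longlonglongrightarrow> f x + g \<bullet> (u - x)"
      using ysq q(2) isCont_tendsto_compose[OF f_cont[OF x] ysq]
      by (auto intro!: tendsto_intros simp: o_def)
    moreover have "\<forall>n. f (ys (q n)) + G (ys (q n)) \<bullet> (u - ys (q n)) \<le> f u"
      using tangent ys(1) u by blast
    ultimately show ?thesis by (rule lim_le_const)
  qed
  then have "g = G x" using subgrad_eq_grad[OF x] by blast
  then have "((\<lambda>n. G (ys n)) \<circ> q) \<longlonglongrightarrow> G x" using q(2) by simp
  then have "\<forall>\<^sub>F n in sequentially. norm (G (ys (q n)) - G x) < \<epsilon>"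
    using eps by (auto simp: o_def dest!: tendstoD[where e=\<epsilon>] simp: dist_norm)
  then show False using ys(3) by (auto dest: eventually_happens')
qed

lemma G_cont: "continuous_on U G"
  unfolding continuous_on_iff
proof (intro ballI allI impI)
  fix x e assume "x \<in> U" "(0::real) < e"
  from G_cont_at[OF this] show "\<exists>d>0. \<forall>y\<in>U. dist y x < d \<longrightarrow> dist (G y) (G x) < e"
    by (simp add: dist_norm)
qed

lemma G_isCont: "x \<in> U \<Longrightarrow> isCont G x"
  using G_cont continuous_on_eq_continuous_at open_interior by blast


lemma D_unif_pos:
  assumes K: "compact K" "K \<subseteq> U" and eps: "\<epsilon> > 0"
  shows "\<exists>\<eta>>0. \<forall>a\<in>K. \<forall>b\<in>edom Phi. \<epsilon> \<le> norm (b - a) \<longrightarrow> \<eta> \<le> D b a"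
proof (rule ccontr)
  assume neg: "\<not> ?thesis"
  have neg': "\<forall>\<eta>>0. \<exists>a\<in>K. \<exists>b\<in>edom Phi. \<epsilon> \<le> norm (b - a) \<and> D b a < \<eta>"
    using neg by (simp add: not_le)
  have ex: "\<forall>n. \<exists>p. fst p \<in> K \<and> snd p \<in> edom Phi \<and> \<epsilon> \<le> norm (snd p - fst p) \<and> D (snd p) (fst p) < inverse (real (Suc n))"
  proof
    fix n
    have "inverse (real (Suc n)) > 0" by simp
    then obtain a b where "a \<in> K" "b \<in> edom Phi" "\<epsilon> \<le> norm (b - a)" "D b a < inverse (real (Suc n))"
      using neg' by blast
    then show "\<exists>p. fst p \<in> K \<and> snd p \<in> edom Phi \<and> \<epsilon> \<le> norm (snd p - fst p) \<and> D (snd p) (fst p) < inverse (real (Suc n))"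
      by (intro exI[of _ "(a, b)"]) simp
  qed
  obtain P where P: "\<forall>n. fst (P n) \<in> K \<and> snd (P n) \<in> edom Phi \<and> \<epsilon> \<le> norm (snd (P n) - fst (P n)) \<and> D (snd (P n)) (fst (P n)) < inverse (real (Suc n))"
    using choice[OF ex] by blast
  define as where "as n = fst (P n)" for n
  define bs where "bs n = snd (P n)" for n
  have ab: "\<And>n. as n \<in> K" "\<And>n. bs n \<in> edom Phi"
    "\<And>n. \<epsilon> \<le> norm (bs n - as n)" "\<And>n. D (bs n) (as n) < inverse (real (Suc n))"
    using P unfolding as_def bs_def by auto
  define t where "t n = \<epsilon> / norm (bs n - as n)" for n
  define qs where "qs n = (1 - t n) *\<^sub>R as n + t n *\<^sub>R bs n" for n
  have asU: "as n \<in> U" for n using ab(1) K(2) by auto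
  have ase: "as n \<in> edom Phi" for n using asU U_sub by auto
  have t: "0 < t n" "t n \<le> 1" for n
  proof -
    have nn: "0 < norm (bs n - as n)" using ab(3)[of n] eps by linarith
    then show "0 < t n" unfolding t_def using eps by simp
    show "t n \<le> 1" unfolding t_def using nn ab(3)[of n] by (simp add: divide_le_eq)
  qed
  have qs_diff: "qs n - as n = t n *\<^sub>R (bs n - as n)" for n
    unfolding qs_def by (simp add: algebra_simps)
  have qs_norm: "norm (qs n - as n) = \<epsilon>" for n
  proof -
    have nn: "0 < norm (bs n - as n)" using ab(3)[of n] eps by linarith
    have "norm (qs n - as n) = t n * norm (bs n - as n)" using qs_diff[of n] t(1)[of n] by simp
    then show ?thesis unfolding t_def using nn by simp
  qed
  have qs_e: "qs n \<in> edom Phi" and qs_f: "f (qs n) \<le> (1 - t n) * f (as n) + t n * f (bs n)" for n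
    using conv_comb[OF ase ab(2) less_imp_le[OF t(1)] t(2)] unfolding qs_def by auto
  have Dq: "D (qs n) (as n) < inverse (real (Suc n))" for n
  proof -
    have "D (qs n) (as n) \<le> t n * D (bs n) (as n)"
      using qs_f[of n] unfolding D_def qs_diff by (simp add: algebra_simps)
    also have "\<dots> \<le> D (bs n) (as n)"
      using t[of n] D_nonneg[OF asU ab(2)] by (simp add: mult_left_le_one_le)
    finally show ?thesis using ab(4)[of n] by simp
  qed
  have cpt: "compact (K \<times> sphere (0::'a) \<epsilon>)" using K(1) compact_sphere by (rule compact_Times)
  have inS: "\<And>n. (as n, qs n - as n) \<in> K \<times> sphere (0::'a) \<epsilon>" using ab(1) qs_norm by simp
  have "\<exists>l\<in>K \<times> sphere (0::'a) \<epsilon>. \<exists>q. strict_mono q \<and> ((\<lambda>n. (as n, qs n - as n)) \<circ> q) \<longlonglongrightarrow> l"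
    using compact_imp_seq_compact[OF cpt, unfolded seq_compact_def, rule_format, OF inS] .
  then obtain l q where l: "l \<in> K \<times> sphere (0::'a) \<epsilon>" and q: "strict_mono q"
    "((\<lambda>n. (as n, qs n - as n)) \<circ> q) \<longlonglongrightarrow> l"
    by blast
  obtain a0 d0 where l': "l = (a0, d0)" by (cases l)
  have a0: "a0 \<in> K" and d0: "norm d0 = \<epsilon>" using l unfolding l' by (simp_all add: mem_Times_iff)
  have a0U: "a0 \<in> U" using a0 K(2) by auto
  have asq: "(\<lambda>n. as (q n)) \<longlonglongrightarrow> a0" using tendsto_fst[OF q(2)] l' by (simp add: o_def)
  have dq: "(\<lambda>n. qs (q n) - as (q n)) \<longlonglongrightarrow> d0" using tendsto_snd[OF q(2)] l' by (simp add: o_def)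
  have qsq: "(\<lambda>n. qs (q n)) \<longlonglongrightarrow> a0 + d0"
    using tendsto_add[OF asq dq] by simp
  have inv: "(\<lambda>n. inverse (real (Suc (q n)))) \<longlonglongrightarrow> 0"
    using LIMSEQ_subseq_LIMSEQ[OF LIMSEQ_inverse_real_of_nat q(1)] by (simp add: o_def)
  have fa: "(\<lambda>n. f (as (q n))) \<longlonglongrightarrow> f a0" using isCont_tendsto_compose[OF f_cont[OF a0U] asq] .
  have Ga: "(\<lambda>n. G (as (q n))) \<longlonglongrightarrow> G a0" using isCont_tendsto_compose[OF G_isCont[OF a0U] asq] .
  have bl: "(\<lambda>n. inverse (real (Suc (q n))) + f (as (q n)) + G (as (q n)) \<bullet> (qs (q n) - as (q n)))
      \<longlonglongrightarrow> 0 + f a0 + G a0 \<bullet> d0"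
    by (intro tendsto_intros inv fa Ga dq)
  have "\<forall>n. qs (q n) \<in> edom Phi \<and> f (qs (q n)) \<le> inverse (real (Suc (q n))) + f (as (q n)) + G (as (q n)) \<bullet> (qs (q n) - as (q n))"
  proof
    fix n
    have "D (qs (q n)) (as (q n)) \<le> inverse (real (Suc (q n)))" using Dq less_imp_le by blast
    then show "qs (q n) \<in> edom Phi \<and> f (qs (q n)) \<le> inverse (real (Suc (q n))) + f (as (q n)) + G (as (q n)) \<bullet> (qs (q n) - as (q n))"
      using qs_e unfolding D_def by simp
  qed
  from lsc_seq[OF qsq bl] this
  have qb: "a0 + d0 \<in> edom Phi" "f (a0 + d0) \<le> f a0 + G a0 \<bullet> d0" by auto
  have lb: "(f a0 - G a0 \<bullet> a0) + G a0 \<bullet> u \<le> f u" if "u \<in> edom Phi" for u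
    using tangent[OF a0U that] by (simp add: inner_diff_right)
  have e2: "f (a0 + d0) = (f a0 - G a0 \<bullet> a0) + G a0 \<bullet> (a0 + d0)"
    using qb(2) lb[OF qb(1)] by (simp add: inner_add_right)
  have "d0 \<noteq> 0" using d0 eps by auto
  then have ne: "a0 \<noteq> a0 + d0" by simp
  have a0e: "a0 \<in> edom Phi" using a0U U_sub by blast
  have e1: "f a0 = (f a0 - G a0 \<bullet> a0) + G a0 \<bullet> a0" by simp
  show False
    by (rule sc_contra[OF ne a0e qb(1) lb e1 e2])
qed

lemma D_to_zero:
  assumes K: "compact K" "K \<subseteq> U" and a: "\<And>n. a n \<in> K" and b: "\<And>n. b n \<in> edom Phi"
    and lim: "(\<lambda>n. D (b n) (a n)) \<longlonglongrightarrow> 0"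
  shows "(\<lambda>n. b n - a n) \<longlonglongrightarrow> 0"
proof (rule tendstoI)
  fix e :: real assume e: "e > 0"
  obtain \<eta> where eta: "\<eta> > 0" "\<And>a b. a \<in> K \<Longrightarrow> b \<in> edom Phi \<Longrightarrow> e \<le> norm (b - a) \<Longrightarrow> \<eta> \<le> D b a"
    using D_unif_pos[OF K e] by blast
  have "\<forall>\<^sub>F n in sequentially. dist (D (b n) (a n)) 0 < \<eta>" using tendstoD[OF lim eta(1)] .
  then show "\<forall>\<^sub>F n in sequentially. dist (b n - a n) 0 < e"
  proof (rule eventually_mono)
    fix n assume "dist (D (b n) (a n)) 0 < \<eta>"
    then have "D (b n) (a n) < \<eta>" by simp
    then have "\<not> e \<le> norm (b n - a n)" using eta(2)[OF a b] by force
    then show "dist (b n - a n) 0 < e" by simp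
  qed
qed

end
context leg begin

abbreviation Psi where "Psi \<equiv> conj_fun Phi"

lemma conj_ge: "u \<in> edom Phi \<Longrightarrow> ereal (u \<bullet> v - f u) \<le> Psi v"
proof -
  assume u: "u \<in> edom Phi"
  have "ereal (u \<bullet> v) - Phi u \<le> Psi v" unfolding conj_fun_def by (rule SUP_upper) simp
  then show ?thesis using fin[OF u] by simp
qed

lemma ereal_fin_le: "ereal a \<le> X \<Longrightarrow> X < \<infinity> \<Longrightarrow> a \<le> real_of_ereal X"
  by (cases X) auto

lemma coercive_from_int:
  assumes y: "y \<in> interior (edom Psi)"
  shows "\<exists>e>0. \<exists>C. \<forall>u\<in>edom Phi. e * norm u - C \<le> f u - y \<bullet> u"
proof -
  obtain e0 where e0: "e0 > 0" "ball y e0 \<subseteq> edom Psi"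
    using y open_interior open_contains_ball interior_subset by (metis subset_trans)
  define e1 where "e1 = e0 / 2"
  have e1: "e1 > 0" "e1 < e0" using e0 unfolding e1_def by auto
  define Cp where "Cp b = real_of_ereal (Psi (y + e1 *\<^sub>R b))" for b
  define Cm where "Cm b = real_of_ereal (Psi (y - e1 *\<^sub>R b))" for b
  define S where "S = (\<Sum>b\<in>Basis. \<bar>Cp b\<bar> + \<bar>Cm b\<bar>)"
  have bnd: "e1 * \<bar>u \<bullet> b\<bar> \<le> (f u - y \<bullet> u) + (\<bar>Cp b\<bar> + \<bar>Cm b\<bar>)" if u: "u \<in> edom Phi" and b: "b \<in> Basis" for u b
  proof -
    have nb: "norm b = 1" using b by simp
    have p1: "y + e1 *\<^sub>R b \<in> edom Psi" using e0(2) e1 nb by (auto simp: dist_norm)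
    have p2: "y - e1 *\<^sub>R b \<in> edom Psi" using e0(2) e1 nb by (auto simp: dist_norm)
    have "u \<bullet> (y + e1 *\<^sub>R b) - f u \<le> Cp b" unfolding Cp_def
      by (rule ereal_fin_le[OF conj_ge[OF u]]) (use p1 in \<open>simp add: edom_def\<close>)
    moreover have "u \<bullet> (y - e1 *\<^sub>R b) - f u \<le> Cm b" unfolding Cm_def
      by (rule ereal_fin_le[OF conj_ge[OF u]]) (use p2 in \<open>simp add: edom_def\<close>)
    ultimately have "e1 * (u \<bullet> b) \<le> (f u - y \<bullet> u) + Cp b" "- (e1 * (u \<bullet> b)) \<le> (f u - y \<bullet> u) + Cm b"
      by (simp_all add: inner_add_right inner_diff_right inner_commute algebra_simps)
    then show ?thesis using e1 by (auto simp: abs_if abs_mult)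
  qed
  have "(e1 / DIM('a)) * norm u - S / DIM('a) \<le> f u - y \<bullet> u" if u: "u \<in> edom Phi" for u
  proof -
    have "e1 * norm u \<le> e1 * (\<Sum>b\<in>Basis. \<bar>u \<bullet> b\<bar>)" using e1 norm_le_l1[of u] by (simp add: mult_left_mono)
    also have "\<dots> = (\<Sum>b\<in>Basis. e1 * \<bar>u \<bullet> b\<bar>)" by (simp add: sum_distrib_left)
    also have "\<dots> \<le> (\<Sum>b\<in>Basis. (f u - y \<bullet> u) + (\<bar>Cp b\<bar> + \<bar>Cm b\<bar>))"
      by (rule sum_mono) (rule bnd[OF u])
    also have "\<dots> = DIM('a) * (f u - y \<bullet> u) + S" unfolding S_def by (simp add: sum.distrib)
    finally have "e1 * norm u \<le> DIM('a) * (f u - y \<bullet> u) + S" .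
    then show ?thesis by (simp add: field_simps)
  qed
  moreover have "e1 / DIM('a) > 0" using e1 by simp
  ultimately show ?thesis by blast
qed

lemma min_exists:
  assumes e: "e > 0" and lb: "\<And>u. u \<in> edom Phi \<Longrightarrow> e * norm u - C \<le> f u - v \<bullet> u"
  shows "\<exists>x\<in>edom Phi. \<forall>u\<in>edom Phi. f x - v \<bullet> x \<le> f u - v \<bullet> u"
proof -
  define S where "S = (\<lambda>u. f u - v \<bullet> u) ` edom Phi"
  have Sne: "S \<noteq> {}" using edom_ne unfolding S_def by auto
  have Sbdd: "bdd_below S" unfolding S_def bdd_below_def
  proof (intro exI[of _ "- C"] ballI)
    fix s assume "s \<in> (\<lambda>u. f u - v \<bullet> u) ` edom Phi"
    then obtain u where u: "u \<in> edom Phi" "s = f u - v \<bullet> u" by auto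
    then show "- C \<le> s" using lb[OF u(1)] e by (smt (verit) mult_nonneg_nonneg norm_ge_zero)
  qed
  define m where "m = Inf S"
  have ex: "\<forall>n. \<exists>u. u \<in> edom Phi \<and> f u - v \<bullet> u < m + inverse (real (Suc n))"
  proof
    fix n
    have "Inf S < m + inverse (real (Suc n))" unfolding m_def by simp
    from cInf_lessD[OF Sne this] show "\<exists>u. u \<in> edom Phi \<and> f u - v \<bullet> u < m + inverse (real (Suc n))"
      unfolding S_def by auto
  qed
  obtain us where us: "\<forall>n. us n \<in> edom Phi \<and> f (us n) - v \<bullet> us n < m + inverse (real (Suc n))"
    using choice[OF ex] by blast
  have "norm (us n) \<le> (m + 1 + C) / e" for n
  proof -
    have "e * norm (us n) - C \<le> f (us n) - v \<bullet> us n" using lb us by blast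
    also have "\<dots> < m + inverse (real (Suc n))" using us by blast
    also have "inverse (real (Suc n)) \<le> 1" by (simp add: field_simps)
    finally show ?thesis using e by (simp add: field_simps)
  qed
  then have "bounded (range us)" unfolding bounded_iff by blast
  then obtain x q where q: "strict_mono q" "(us \<circ> q) \<longlonglongrightarrow> x"
    using bounded_imp_convergent_subsequence by blast
  have inv: "(\<lambda>n. inverse (real (Suc (q n)))) \<longlonglongrightarrow> 0"
    using LIMSEQ_subseq_LIMSEQ[OF LIMSEQ_inverse_real_of_nat q(1)] by (simp add: o_def)
  have usq: "(\<lambda>n. us (q n)) \<longlonglongrightarrow> x" using q(2) by (simp add: o_def)
  have bl: "(\<lambda>n. m + inverse (real (Suc (q n))) + v \<bullet> us (q n)) \<longlonglongrightarrow> m + 0 + v \<bullet> x"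
    by (intro tendsto_intros inv usq)
  have "\<forall>n. us (q n) \<in> edom Phi \<and> f (us (q n)) \<le> m + inverse (real (Suc (q n))) + v \<bullet> us (q n)"
    using us by (smt (verit))
  from lsc_seq[OF usq bl] this have x: "x \<in> edom Phi" "f x \<le> m + v \<bullet> x" by auto
  have "f x - v \<bullet> x \<le> f u - v \<bullet> u" if u: "u \<in> edom Phi" for u
  proof -
    have "m \<le> f u - v \<bullet> u" unfolding m_def S_def by (rule cInf_lower) (use u Sbdd S_def in auto)
    then show ?thesis using x by simp
  qed
  with x show ?thesis by blast
qed


lemma conj_grad:
  assumes y: "y \<in> interior (edom Psi)" and xU: "egrad Psi y \<in> U"
  shows "G (egrad Psi y) = y"
proof -
  obtain e C where e: "e > 0" and lb0: "\<And>u. u \<in> edom Phi \<Longrightarrow> e * norm u - C \<le> f u - y \<bullet> u"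
    using coercive_from_int[OF y] by blast
  define \<delta> where "\<delta> = e / 2"
  have \<delta>: "\<delta> > 0" unfolding \<delta>_def using e by simp
  have lbv: "\<delta> * norm u - C \<le> f u - v \<bullet> u" if v: "norm (v - y) < \<delta>" and u: "u \<in> edom Phi" for u v
  proof -
    have "(v - y) \<bullet> u \<le> norm (v - y) * norm u" by (rule norm_cauchy_schwarz)
    also have "\<dots> \<le> \<delta> * norm u" using v by (intro mult_right_mono) auto
    finally have "(v - y) \<bullet> u \<le> \<delta> * norm u" .
    then have i1: "v \<bullet> u - y \<bullet> u \<le> \<delta> * norm u" by (simp add: inner_diff_left)
    have eq: "e * norm u = 2 * (\<delta> * norm u)" unfolding \<delta>_def by simp
    have i2: "0 \<le> \<delta> * norm u" using \<delta> by simp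
    show ?thesis using lb0[OF u] eq i1 i2 by linarith
  qed
  define ismin where "ismin v x \<longleftrightarrow> x \<in> edom Phi \<and> (\<forall>u\<in>edom Phi. f x - v \<bullet> x \<le> f u - v \<bullet> u)" for v x
  define xm where "xm v = (SOME x. ismin v x)" for v
  have xm: "ismin v (xm v)" if v: "norm (v - y) < \<delta>" for v
  proof -
    have "\<exists>x. ismin v x" using min_exists[OF \<delta> lbv[OF v]] unfolding ismin_def by blast
    then show ?thesis unfolding xm_def by (rule someI_ex)
  qed
  define xs where "xs = xm y"
  have xs: "ismin y xs" unfolding xs_def using xm[of y] \<delta> by simp
  have uniq: "x = xs" if x: "ismin y x" for x
  proof (rule ccontr)
    assume ne: "x \<noteq> xs"
    have lb: "(f xs - y \<bullet> xs) + y \<bullet> u \<le> f u" if "u \<in> edom Phi" for u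
      using xs that unfolding ismin_def by auto
    have e1: "f x = (f xs - y \<bullet> xs) + y \<bullet> x"
      using x xs unfolding ismin_def by force
    have e2: "f xs = (f xs - y \<bullet> xs) + y \<bullet> xs" by simp
    show False using sc_contra[OF ne _ _ lb e1 e2] x xs unfolding ismin_def by blast
  qed
  have cont: "\<exists>d>0. \<forall>v. norm (v - y) < d \<longrightarrow> norm (xm v - xs) < \<epsilon>" if eps: "\<epsilon> > 0" for \<epsilon>
  proof (rule ccontr)
    assume neg: "\<not> ?thesis"
    have ex: "\<forall>n. \<exists>v. norm (v - y) < min \<delta> (inverse (real (Suc n))) \<and> \<not> norm (xm v - xs) < \<epsilon>"
    proof
      fix n
      have "min \<delta> (inverse (real (Suc n))) > 0" using \<delta> by simp
      then show "\<exists>v. norm (v - y) < min \<delta> (inverse (real (Suc n))) \<and> \<not> norm (xm v - xs) < \<epsilon>"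
        using neg by blast
    qed
    obtain vs where vs: "\<forall>n. norm (vs n - y) < min \<delta> (inverse (real (Suc n))) \<and> \<not> norm (xm (vs n) - xs) < \<epsilon>"
      using choice[OF ex] by blast
    have vsd: "norm (vs n - y) < \<delta>" for n using vs by simp
    have vs_lim: "vs \<longlonglongrightarrow> y"
    proof -
      have "(\<lambda>n. vs n - y) \<longlonglongrightarrow> 0"
        by (rule Lim_null_comparison[OF _ LIMSEQ_inverse_real_of_nat])
           (use vs in \<open>auto intro!: always_eventually less_imp_le\<close>)
      then show ?thesis by (simp add: LIM_zero_iff)
    qed
    define as where "as n = xm (vs n)" for n
    have asm: "ismin (vs n) (as n)" for n unfolding as_def using xm[OF vsd] .
    have "norm (as n) \<le> (C + \<bar>f xs\<bar> + (norm y + \<delta>) * norm xs) / \<delta>" for n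
    proof -
      have ase: "as n \<in> edom Phi" using asm unfolding ismin_def by blast
      have xse: "xs \<in> edom Phi" using xs unfolding ismin_def by blast
      have c1: "\<delta> * norm (as n) - C \<le> f (as n) - vs n \<bullet> as n" using lbv[OF vsd ase] .
      have c2: "f (as n) - vs n \<bullet> as n \<le> f xs - vs n \<bullet> xs" using asm xse unfolding ismin_def by blast
      have c3: "- (vs n \<bullet> xs) \<le> norm (vs n) * norm xs"
        using norm_cauchy_schwarz[of "- vs n" xs] by simp
      have c4: "norm (vs n) \<le> norm y + \<delta>"
        using vsd[of n] norm_triangle_ineq2[of "vs n" y] by linarith
      have c5: "norm (vs n) * norm xs \<le> (norm y + \<delta>) * norm xs" using c4 by (simp add: mult_right_mono)
      have "\<delta> * norm (as n) \<le> C + \<bar>f xs\<bar> + (norm y + \<delta>) * norm xs"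
        using c1 c2 c3 c5 by linarith
      then show ?thesis using \<delta> by (simp add: field_simps)
    qed
    then have "bounded (range as)" unfolding bounded_iff by blast
    then obtain ab q where q: "strict_mono q" "(as \<circ> q) \<longlonglongrightarrow> ab"
      using bounded_imp_convergent_subsequence by blast
    have asq: "(\<lambda>n. as (q n)) \<longlonglongrightarrow> ab" using q(2) by (simp add: o_def)
    have vsq: "(\<lambda>n. vs (q n)) \<longlonglongrightarrow> y" using LIMSEQ_subseq_LIMSEQ[OF vs_lim q(1)] by (simp add: o_def)
    have abm: "ab \<in> edom Phi \<and> f ab \<le> f u - y \<bullet> u + y \<bullet> ab" if u: "u \<in> edom Phi" for u
    proof -
      have bl: "(\<lambda>n. f u - vs (q n) \<bullet> u + vs (q n) \<bullet> as (q n)) \<longlonglongrightarrow> f u - y \<bullet> u + y \<bullet> ab"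
        by (intro tendsto_intros vsq asq)
      have "\<forall>n. as (q n) \<in> edom Phi \<and> f (as (q n)) \<le> f u - vs (q n) \<bullet> u + vs (q n) \<bullet> as (q n)"
      proof
        fix n
        show "as (q n) \<in> edom Phi \<and> f (as (q n)) \<le> f u - vs (q n) \<bullet> u + vs (q n) \<bullet> as (q n)"
          using asm[of "q n"] u unfolding ismin_def by force
      qed
      from lsc_seq[OF asq bl] this show ?thesis by blast
    qed
    have "ismin y ab" unfolding ismin_def
    proof (intro conjI ballI)
      show "ab \<in> edom Phi" using abm xs unfolding ismin_def by blast
      fix u assume "u \<in> edom Phi"
      then show "f ab - y \<bullet> ab \<le> f u - y \<bullet> u" using abm by force
    qed
    then have "ab = xs" by (rule uniq)
    then have "\<forall>\<^sub>F n in sequentially. dist (as (q n)) xs < \<epsilon>" using tendstoD[OF asq eps] by simp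
    then obtain N where "\<forall>n\<ge>N. dist (as (q n)) xs < \<epsilon>" unfolding eventually_sequentially by blast
    then have "dist (as (q N)) xs < \<epsilon>" by simp
    then show False using vs unfolding as_def by (simp add: dist_norm)
  qed
  define F where "F v = real_of_ereal (Psi v)" for v
  have Fv: "F v = xm v \<bullet> v - f (xm v)" if v: "norm (v - y) < \<delta>" for v
  proof -
    have m: "ismin v (xm v)" using xm[OF v] .
    have "Psi v = ereal (xm v \<bullet> v - f (xm v))"
    proof (rule antisym)
      show "Psi v \<le> ereal (xm v \<bullet> v - f (xm v))"
        unfolding conj_fun_def
      proof (rule SUP_least)
        fix x
        show "ereal (x \<bullet> v) - Phi x \<le> ereal (xm v \<bullet> v - f (xm v))"
        proof (cases "x \<in> edom Phi")
          case True
          then have "f (xm v) - v \<bullet> xm v \<le> f x - v \<bullet> x" using m unfolding ismin_def by blast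
          then show ?thesis using fin[OF True] by (simp add: inner_commute)
        next
          case False then have "Phi x = \<infinity>" using edom_iff by blast
          then show ?thesis by simp
        qed
      qed
      show "ereal (xm v \<bullet> v - f (xm v)) \<le> Psi v"
        using conj_ge m unfolding ismin_def by blast
    qed
    then show ?thesis unfolding F_def by simp
  qed
  have Fy: "F y = xs \<bullet> y - f xs" using Fv[of y] \<delta> unfolding xs_def by simp
  have deriv: "(F has_derivative (\<lambda>h. xs \<bullet> h)) (at y)"
    unfolding has_derivative_iff_norm
  proof
    show "bounded_linear ((\<bullet>) xs)" by (rule bounded_linear_inner_right)
    show "((\<lambda>v. norm (F v - F y - xs \<bullet> (v - y)) / norm (v - y)) \<longlongrightarrow> 0) (at y)"
      unfolding LIM_eq
    proof (intro allI impI)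
      fix r :: real assume r: "r > 0"
      obtain d where d: "d > 0" "\<And>v. norm (v - y) < d \<Longrightarrow> norm (xm v - xs) < r"
        using cont[OF r] by blast
      show "\<exists>s>0. \<forall>v. v \<noteq> y \<and> norm (v - y) < s \<longrightarrow> norm (norm (F v - F y - xs \<bullet> (v - y)) / norm (v - y) - 0) < r"
      proof (intro exI[of _ "min d \<delta>"] conjI allI impI)
        show "min d \<delta> > 0" using d \<delta> by simp
        fix v assume v: "v \<noteq> y \<and> norm (v - y) < min d \<delta>"
        have vd: "norm (v - y) < \<delta>" using v by simp
        have mv: "ismin v (xm v)" using xm[OF vd] .
        have xse: "xs \<in> edom Phi" using xs unfolding ismin_def by blast
        have xmve: "xm v \<in> edom Phi" using mv unfolding ismin_def by blast
        have l1: "f (xm v) - v \<bullet> xm v \<le> f xs - v \<bullet> xs" using mv xse unfolding ismin_def by blast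
        have l2: "f xs - y \<bullet> xs \<le> f (xm v) - y \<bullet> xm v" using xs xmve unfolding ismin_def by blast
        have lo: "0 \<le> F v - F y - xs \<bullet> (v - y)"
          using l1 unfolding Fv[OF vd] Fy by (simp add: inner_diff_right inner_commute)
        have "F v - F y - xs \<bullet> (v - y) \<le> (xm v - xs) \<bullet> (v - y)"
          using l2 unfolding Fv[OF vd] Fy by (simp add: inner_diff_right inner_diff_left inner_commute)
        also have "\<dots> \<le> norm (xm v - xs) * norm (v - y)" by (rule norm_cauchy_schwarz)
        also have "\<dots> < r * norm (v - y)"
          using d(2)[of v] v by (intro mult_strict_right_mono) auto
        finally have "norm (F v - F y - xs \<bullet> (v - y)) < r * norm (v - y)" using lo by simp
        then show "norm (norm (F v - F y - xs \<bullet> (v - y)) / norm (v - y) - 0) < r"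
          using v by (simp add: field_simps)
      qed
    qed
  qed
  have "egrad Psi y = xs"
  proof -
    have ex: "\<exists>g. ((\<lambda>v. real_of_ereal (Psi v)) has_derivative (\<lambda>h. g \<bullet> h)) (at y)"
      using deriv unfolding F_def by blast
    have d2: "((\<lambda>v. real_of_ereal (Psi v)) has_derivative (\<lambda>h. egrad Psi y \<bullet> h)) (at y)"
      unfolding egrad_def by (rule someI_ex[OF ex])
    have "(\<lambda>h. egrad Psi y \<bullet> h) = (\<lambda>h. xs \<bullet> h)"
      by (rule has_derivative_unique[OF d2]) (use deriv in \<open>simp add: F_def[abs_def]\<close>)
    then have "egrad Psi y \<bullet> (egrad Psi y - xs) = xs \<bullet> (egrad Psi y - xs)" by meson
    then have "(egrad Psi y - xs) \<bullet> (egrad Psi y - xs) = 0" by (simp add: inner_diff_left)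
    then show ?thesis by simp
  qed
  moreover have "y = G xs"
  proof (rule subgrad_eq_grad)
    show "xs \<in> U" using xU \<open>egrad Psi y = xs\<close> by simp
    fix u assume "u \<in> edom Phi"
    then have "f xs - y \<bullet> xs \<le> f u - y \<bullet> u" using xs unfolding ismin_def by blast
    then show "f xs + y \<bullet> (u - xs) \<le> f u" by (simp add: inner_diff_right)
  qed
  ultimately show ?thesis by simp
qed

end

lemma dec_conv:
  fixes X :: "nat \<Rightarrow> real"
  assumes dec: "\<And>k. X (Suc k) \<le> X k" and nn: "\<And>k. 0 \<le> X k"
  shows "\<exists>L. X \<longlonglongrightarrow> L"
proof -
  have d: "decseq X" using dec by (rule decseq_SucI)
  have "Bseq X"
  proof (rule BseqI')
    fix n show "norm (X n) \<le> X 0" using decseqD[OF d, of 0 n] nn[of n] by simp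
  qed
  moreover have "monoseq X" unfolding monoseq_def using decseqD[OF d] by blast
  ultimately have "convergent X" by (rule Bseq_monoseq_convergent)
  then show ?thesis unfolding convergent_def .
qed

context leg begin

lemma D_three: "D u a' - D u a - (D p a' - D p a) = (G a - G a') \<bullet> (u - p)"
  unfolding D_def by (simp add: inner_diff_right inner_diff_left algebra_simps)

lemma breg_D: "u \<in> edom Phi \<Longrightarrow> a \<in> U \<Longrightarrow> bregman Phi u a = ereal (D u a)"
  unfolding bregman_def D_def using fin U_sub by auto

end

theorem mainTheorem5:
  fixes Phi :: "'a::euclidean_space \<Rightarrow> ereal"
    and T :: "'a \<Rightarrow> 'a set"
    and z p w :: "nat \<Rightarrow> 'a"
    and sigma_seq rho_seq :: "nat \<Rightarrow> real"
    and sigma rho :: real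
  assumes legendre: "legendre Phi"
    and maxmono: "maximal_monotone T"
    and dom_meet: "interior (edom Phi) \<inter> op_dom T \<noteq> {}"
    and z0: "z 0 \<in> interior (edom Phi)"
    and sigma_pos: "0 < sigma"
    and sigma_ge: "\<And>k. sigma \<le> sigma_seq k"
    and rho_lt: "rho < 1"
    and rho_bounds: "\<And>k. 0 \<le> rho_seq k \<and> rho_seq k \<le> rho"
    and p_dom: "\<And>k. p k \<in> edom Phi"
    and w_in: "\<And>k. w k \<in> T (p k)"
    and step_dom: "\<And>k. egrad Phi (z k) - sigma_seq k *\<^sub>R w k \<in> interior (edom (conj_fun Phi))"
    and step: "\<And>k. z (Suc k) = egrad (conj_fun Phi) (egrad Phi (z k) - sigma_seq k *\<^sub>R w k)"
    and z_int: "\<And>k. z (Suc k) \<in> interior (edom Phi)"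
    and inexact: "\<And>k. bregman Phi (p k) (z (Suc k)) \<le> ereal (rho_seq k) * bregman Phi (p k) (z k)"
    and zstar: "\<exists>zs \<in> zer T \<inter> interior (edom Phi). coercive (bregman Phi zs)"
  shows "\<exists>zinf \<in> zer T \<inter> interior (edom Phi).
           z \<longlonglongrightarrow> zinf \<and> p \<longlonglongrightarrow> zinf \<and> w \<longlonglongrightarrow> 0"
proof -
  interpret leg Phi using legendre by unfold_locales
  obtain zs where zsT: "zs \<in> zer T" and zsU: "zs \<in> U" and coer: "coercive (bregman Phi zs)"
    using zstar by blast
  have zU: "z k \<in> U" for k using z0 z_int by (cases k) auto
  have ze: "z k \<in> edom Phi" for k using zU U_sub by auto
  have zse: "zs \<in> edom Phi" using zsU U_sub by auto
  have sig: "sigma_seq k > 0" for k using sigma_pos sigma_ge[of k] by linarith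
  have rho0: "0 \<le> rho" using rho_bounds[of 0] by linarith
  have gstep: "G (z k) - G (z (Suc k)) = sigma_seq k *\<^sub>R w k" for k
  proof -
    have "G (egrad (conj_fun Phi) (G (z k) - sigma_seq k *\<^sub>R w k)) = G (z k) - sigma_seq k *\<^sub>R w k"
      by (rule conj_grad[OF step_dom]) (use z_int step in simp)
    then show ?thesis using step[of k] by simp
  qed
  have Dnn: "0 \<le> D (p k) (z j)" for k j using D_nonneg[OF zU p_dom] .
  have inex: "D (p k) (z (Suc k)) \<le> rho * D (p k) (z k)" for k
  proof -
    have "ereal (D (p k) (z (Suc k))) \<le> ereal (rho_seq k * D (p k) (z k))"
      using inexact[of k] unfolding breg_D[OF p_dom zU] by simp
    then have "D (p k) (z (Suc k)) \<le> rho_seq k * D (p k) (z k)" by simp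
    also have "\<dots> \<le> rho * D (p k) (z k)" using rho_bounds[of k] Dnn by (intro mult_right_mono) auto
    finally show ?thesis .
  qed
  have mono: "0 \<le> (u - v) \<bullet> (x - y)" if "u \<in> T x" "v \<in> T y" for u v x y
    using maxmono that unfolding maximal_monotone_def monotone_op_def by blast
  have fejer: "D u (z (Suc k)) \<le> D u (z k) - (1 - rho) * D (p k) (z k)"
    if u: "u \<in> zer T" for u k
  proof -
    have "0 \<le> (w k - 0) \<bullet> (p k - u)" using mono[OF w_in] u unfolding zer_def by blast
    then have wn: "sigma_seq k * (w k \<bullet> (u - p k)) \<le> 0"
      using sig[of k] by (simp add: inner_diff_right mult_nonneg_nonpos)
    have "D u (z (Suc k)) - D u (z k) - (D (p k) (z (Suc k)) - D (p k) (z k)) = sigma_seq k * (w k \<bullet> (u - p k))"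
      using D_three[of u "z (Suc k)" "z k" "p k"] gstep[of k] by simp
    then show ?thesis using wn inex[of k] by (simp add: algebra_simps)
  qed
  define ds where "ds k = D zs (z k)" for k
  have ds_nn: "0 \<le> ds k" for k unfolding ds_def using D_nonneg[OF zU zse] .
  have ds_dec: "ds (Suc k) \<le> ds k - (1 - rho) * D (p k) (z k)" for k
    unfolding ds_def using fejer[OF zsT] .
  have ds_dec': "ds (Suc k) \<le> ds k" for k
    using ds_dec[of k] Dnn[of k k] rho_lt by (smt (verit) mult_nonneg_nonneg)
  have ds_le0: "ds k \<le> ds 0" for k using decseqD[OF decseq_SucI[of ds, OF ds_dec'], of 0 k] by simp

  obtain R where R: "\<And>x. R \<le> norm x \<Longrightarrow> ereal (ds 0 + 1) \<le> bregman Phi zs x"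
    using coer unfolding coercive_def by blast
  have zR: "norm (z k) < R" for k
  proof (rule ccontr)
    assume "\<not> norm (z k) < R"
    then have "ereal (ds 0 + 1) \<le> ereal (ds k)"
      using R[of "z k"] unfolding breg_D[OF zse zU] ds_def by simp
    then show False using ds_le0[of k] by simp
  qed
  have bz: "bounded (range z)" unfolding bounded_iff using zR less_imp_le by blast
  obtain rr where rr: "rr > 0" "\<And>y. y \<in> U \<Longrightarrow> rr * norm (G y) - 1 \<le> D zs y"
    using grad_bound[OF zsU] by blast
  have Gz: "norm (G (z k)) \<le> (ds 0 + 1) / rr" for k
    using rr(2)[OF zU[of k]] ds_le0[of k] rr(1) unfolding ds_def by (simp add: field_simps)
  define K where "K = closure (range z)"
  have Kc: "compact K" unfolding K_def using bz compact_closure by blast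
  have KU: "K \<subseteq> U"
  proof
    fix x assume x: "x \<in> K"
    then obtain s where s: "\<And>n. s n \<in> range z" "s \<longlonglongrightarrow> x"
      unfolding K_def closure_sequential by blast
    show "x \<in> U"
    proof (rule ccontr)
      assume nU: "x \<notin> U"
      have "range z \<subseteq> edom Phi" using ze by auto
      then have "x \<in> closure (edom Phi)" using x closure_mono unfolding K_def by blast
      then have fr: "x \<in> frontier (edom Phi)" using nU unfolding frontier_def by blast
      have sU: "\<forall>n. s n \<in> U" using s(1) zU by (metis imageE)
      have "filterlim (\<lambda>n. norm (G (s n))) at_top sequentially"
        using smooth sU s(2) fr unfolding essentially_smooth_def by blast
      then have "\<forall>\<^sub>F n in sequentially. (ds 0 + 1) / rr + 1 \<le> norm (G (s n))"
        by (simp add: filterlim_at_top)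
      then obtain N where "(ds 0 + 1) / rr + 1 \<le> norm (G (s N))"
        unfolding eventually_sequentially by blast
      moreover obtain k where "s N = z k" using s(1)[of N] by blast
      ultimately show False using Gz[of k] by simp
    qed
  qed
  have zK: "z k \<in> K" for k unfolding K_def by (simp add: closure_subset[THEN subsetD])
  obtain L where L: "ds \<longlonglongrightarrow> L" using dec_conv[of ds, OF ds_dec' ds_nn] by blast
  have dd: "(\<lambda>k. (ds k - ds (Suc k)) / (1 - rho)) \<longlonglongrightarrow> (L - L) / (1 - rho)"
    by (intro tendsto_intros L LIMSEQ_Suc[OF L]) (use rho_lt in simp)
  have Dpz: "(\<lambda>k. D (p k) (z k)) \<longlonglongrightarrow> 0"
  proof (rule tendsto_sandwich[OF _ _ tendsto_const dd[simplified]])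
    show "\<forall>\<^sub>F k in sequentially. 0 \<le> D (p k) (z k)" using Dnn by simp
    show "\<forall>\<^sub>F k in sequentially. D (p k) (z k) \<le> (ds k - ds (Suc k)) / (1 - rho)"
      using ds_dec rho_lt by (simp add: field_simps mult.commute)
  qed
  have Dpz1: "(\<lambda>k. D (p k) (z (Suc k))) \<longlonglongrightarrow> 0"
  proof (rule tendsto_sandwich[OF _ _ tendsto_const])
    show "\<forall>\<^sub>F k in sequentially. 0 \<le> D (p k) (z (Suc k))" using Dnn by simp
    show "\<forall>\<^sub>F k in sequentially. D (p k) (z (Suc k)) \<le> rho * D (p k) (z k)" using inex by simp
    show "(\<lambda>k. rho * D (p k) (z k)) \<longlonglongrightarrow> 0" using tendsto_mult_right_zero[OF Dpz] by simp
  qed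
  have pz: "(\<lambda>k. p k - z k) \<longlonglongrightarrow> 0" by (rule D_to_zero[OF Kc KU zK p_dom Dpz])
  have pz1: "(\<lambda>k. p k - z (Suc k)) \<longlonglongrightarrow> 0" by (rule D_to_zero[OF Kc KU zK p_dom Dpz1])
  have zz: "(\<lambda>k. z (Suc k) - z k) \<longlonglongrightarrow> 0"
    using tendsto_diff[OF pz pz1] by simp
  have uc: "uniformly_continuous_on K G"
    by (rule compact_uniformly_continuous[OF continuous_on_subset[OF G_cont KU] Kc])
  have dzz: "(\<lambda>k. dist (z (Suc k)) (z k)) \<longlonglongrightarrow> 0"
    using tendsto_norm_zero[OF zz] by (simp add: dist_norm)
  have Gd: "(\<lambda>k. dist (G (z (Suc k))) (G (z k))) \<longlonglongrightarrow> 0"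
    using uc[unfolded uniformly_continuous_on_sequentially, rule_format, of "\<lambda>k. z (Suc k)" z]
    by (simp add: zK dzz)
  have wlim: "w \<longlonglongrightarrow> 0"
  proof (rule Lim_null_comparison)
    show "\<forall>\<^sub>F k in sequentially. norm (w k) \<le> dist (G (z (Suc k))) (G (z k)) / sigma"
    proof (rule always_eventually, rule allI)
      fix k
      have "sigma * norm (w k) \<le> sigma_seq k * norm (w k)" using sigma_ge[of k] by (simp add: mult_right_mono)
      also have "\<dots> = norm (sigma_seq k *\<^sub>R w k)" using sig[of k] by simp
      also have "\<dots> = dist (G (z (Suc k))) (G (z k))" unfolding gstep[symmetric] by (simp add: dist_norm norm_minus_commute)
      finally show "norm (w k) \<le> dist (G (z (Suc k))) (G (z k)) / sigma" using sigma_pos by (simp add: field_simps)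
    qed
    show "(\<lambda>k. dist (G (z (Suc k))) (G (z k)) / sigma) \<longlonglongrightarrow> 0"
      using tendsto_divide[OF Gd tendsto_const, of sigma] sigma_pos by simp
  qed
  have zK': "\<And>n. z n \<in> K" by (rule zK)
  have "\<exists>l\<in>K. \<exists>r. strict_mono r \<and> (z \<circ> r) \<longlonglongrightarrow> l"
    using compact_imp_seq_compact[OF Kc, unfolded seq_compact_def, rule_format, of z, OF zK'] .
  then obtain zinf r where zinfK: "zinf \<in> K" and r: "strict_mono r" "(z \<circ> r) \<longlonglongrightarrow> zinf"
    by blast
  have zinfU: "zinf \<in> U" using zinfK KU by blast
  have zinfe: "zinf \<in> edom Phi" using zinfU U_sub by blast
  have zr: "(\<lambda>n. z (r n)) \<longlonglongrightarrow> zinf" using r(2) by (simp add: o_def)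
  have pzr: "(\<lambda>n. p (r n) - z (r n)) \<longlonglongrightarrow> 0" using LIMSEQ_subseq_LIMSEQ[OF pz r(1)] by (simp add: o_def)
  have pr: "(\<lambda>n. p (r n)) \<longlonglongrightarrow> zinf" using tendsto_add[OF pzr zr] by simp
  have wr: "(\<lambda>n. w (r n)) \<longlonglongrightarrow> 0" using LIMSEQ_subseq_LIMSEQ[OF wlim r(1)] by (simp add: o_def)
  have zinfT: "zinf \<in> zer T"
  proof -
    have mm: "\<forall>x u. (\<forall>y v. v \<in> T y \<longrightarrow> 0 \<le> (u - v) \<bullet> (x - y)) \<longrightarrow> u \<in> T x"
      using maxmono unfolding maximal_monotone_def by (elim conjE)
    have "\<forall>y v. v \<in> T y \<longrightarrow> 0 \<le> (0 - v) \<bullet> (zinf - y)"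
    proof (intro allI impI)
      fix y v assume v: "v \<in> T y"
      have "(\<lambda>n. (w (r n) - v) \<bullet> (p (r n) - y)) \<longlonglongrightarrow> (0 - v) \<bullet> (zinf - y)"
        by (intro tendsto_intros wr pr)
      moreover have "\<forall>n. 0 \<le> (w (r n) - v) \<bullet> (p (r n) - y)" using mono[OF w_in v] by blast
      ultimately show "0 \<le> (0 - v) \<bullet> (zinf - y)" by (rule lim_ge_const)
    qed
    then have "0 \<in> T zinf" by (rule mm[THEN spec, THEN spec, THEN mp])
    then show ?thesis unfolding zer_def by simp
  qed
  define dz where "dz k = D zinf (z k)" for k
  have dz_nn: "0 \<le> dz k" for k unfolding dz_def using D_nonneg[OF zU zinfe] .
  have dz_dec: "dz (Suc k) \<le> dz k" for k
    using fejer[OF zinfT, of k] Dnn[of k k] rho_lt unfolding dz_def by (smt (verit) mult_nonneg_nonneg)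
  obtain L2 where L2: "dz \<longlonglongrightarrow> L2" using dec_conv[of dz, OF dz_dec dz_nn] by blast
  have "(\<lambda>n. dz (r n)) \<longlonglongrightarrow> f zinf - f zinf - G zinf \<bullet> (zinf - zinf)"
    unfolding dz_def D_def
    by (intro tendsto_intros isCont_tendsto_compose[OF f_cont[OF zinfU] zr]
        isCont_tendsto_compose[OF G_isCont[OF zinfU] zr] zr)
  then have "(\<lambda>n. dz (r n)) \<longlonglongrightarrow> 0" by simp
  moreover have "(\<lambda>n. dz (r n)) \<longlonglongrightarrow> L2" using LIMSEQ_subseq_LIMSEQ[OF L2 r(1)] by (simp add: o_def)
  ultimately have "L2 = 0" using LIMSEQ_unique by blast
  then have "(\<lambda>k. D zinf (z k)) \<longlonglongrightarrow> 0" using L2 unfolding dz_def by simp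
  from D_to_zero[OF Kc KU zK _ this] have "(\<lambda>k. zinf - z k) \<longlonglongrightarrow> 0" using zinfe by blast
  then have zl: "z \<longlonglongrightarrow> zinf"
    using tendsto_diff[OF tendsto_const[of zinf], of "\<lambda>k. zinf - z k" 0] by simp
  have pl: "p \<longlonglongrightarrow> zinf" using tendsto_add[OF pz zl] by simp
  show ?thesis using zinfT zinfU zl pl wlim by blast
qed

end
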